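(* Let $G$ be a countable discrete group acting minimally by homeomorphisms on a compact Hausdorff space $X$, and let $\mu\in P(G,C(X))$. Then for all $t\in G$ and $f\in C(X)$, in $C(X)\rtimes_\lambda G$ we have $\|\mu(f\lambda_t)\|\le\|f\|\,\|\mu\lambda_t\|$.
   Context: $(g\cdot f)(x)=f(g^{-1}x)$. $C(X)\rtimes_\lambda G$ is the reduced crossed product with canonical unitaries $\lambda_t$, $\lambda_tf\lambda_t^*=t\cdot f$; $G$ acts on it by $t\cdot a=\lambda_ta\lambda_t^*$. A generalized $(G,C(X))$-probability measure is a formal sum $\mu=\sum_{i\in I}f_is_if_i$ with $I$ an index set, $s_i\in G$ (repetitions allowed), $f_i\in C(X)$, $f_i\ge0$, $f_i\ne0$, $\sum_if_i^2=1$ (norm-convergent); $P(G,C(X))$ is the set of these; $\mu a=\sum_if_i(s_i\cdot a)f_i$. *)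

theory Defs
  imports "HOL-Analysis.Analysis" "HOL-Library.Countable"
begin

text \<open>The discrete group G is a type of class group_add (written additively, not
necessarily commutative): s + t is the product st, -s the inverse, 0 the unit.\<close>

definition group_action :: "('g::group_add \<Rightarrow> 'x::topological_space \<Rightarrow> 'x) \<Rightarrow> bool" where
  "group_action act \<longleftrightarrow> (\<forall>y. act 0 y = y) \<and> (\<forall>s t y. act (s + t) y = act s (act t y))
      \<and> (\<forall>s. continuous_on UNIV (act s))"

definition minimal_action :: "('g::group_add \<Rightarrow> 'x::topological_space \<Rightarrow> 'x) \<Rightarrow> bool" where
  "minimal_action act \<longleftrightarrow> (\<forall>y. closure (range (\<lambda>g. act g y)) = UNIV)"

text \<open>Generalized (G,C(X))-probability measure mu = sum_i f_i s_i f_i, indexed by the type 'i.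
 sum_i f_i^2 = 1 in sup norm, unconditionally (net of finite subsets).\<close>

definition gen_prob_measure :: "('i \<Rightarrow> 'g) \<Rightarrow> ('i \<Rightarrow> 'x::topological_space \<Rightarrow> real) \<Rightarrow> bool" where
  "gen_prob_measure s fs \<longleftrightarrow>
     (\<forall>i. continuous_on UNIV (fs i) \<and> (\<forall>y. fs i y \<ge> 0) \<and> fs i \<noteq> (\<lambda>y. 0)) \<and>
     uniform_limit UNIV (\<lambda>F y. \<Sum>i\<in>F. (fs i y)\<^sup>2) (\<lambda>y. 1) (finite_subsets_at_top UNIV)"

text \<open>Elements of the reduced crossed product C(X) x|_lambda G are represented via the faithful
 representation  (+)_{x in X} Ind(ev_x)  on  (+)_x l^2(G):
   pi_x(f) delta_g = f(g.x) delta_g,  lambda_t delta_g = delta_{tg}.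
 An element a is stored as its family of matrix coefficients
   M a x h g = < (pi_x x| lambda)(a) delta_g, delta_h >.\<close>

type_synonym ('x,'g) cp_elem = "'x \<Rightarrow> 'g \<Rightarrow> 'g \<Rightarrow> complex"

definition cp_fl :: "('g::group_add \<Rightarrow> 'x \<Rightarrow> 'x) \<Rightarrow> ('x \<Rightarrow> complex) \<Rightarrow> 'g \<Rightarrow> ('x,'g) cp_elem" where
  "cp_fl act f t = (\<lambda>x h g. if h = t + g then f (act h x) else 0)"

definition cp_lambda :: "'g::group_add \<Rightarrow> ('x,'g) cp_elem" where
  "cp_lambda t = (\<lambda>x h g. if h = t + g then 1 else 0)"

text \<open>mu a = sum_i f_i (s_i . a) f_i  where s . a = lambda_s a lambda_s^*;
 its matrix coefficients are the (convergent) sums of those of the summands.\<close>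
definition mu_apply :: "('g::group_add \<Rightarrow> 'x \<Rightarrow> 'x) \<Rightarrow> ('i \<Rightarrow> 'g) \<Rightarrow> ('i \<Rightarrow> 'x \<Rightarrow> real)
     \<Rightarrow> ('x,'g) cp_elem \<Rightarrow> ('x,'g) cp_elem" where
  "mu_apply act s fs a = (\<lambda>x h g. \<Sum>\<^sub>\<infinity>i. complex_of_real (fs i (act h x))
        * a x (- s i + h) (- s i + g) * complex_of_real (fs i (act g x)))"

definition l2_unit_fin :: "('g \<Rightarrow> complex) \<Rightarrow> bool" where
  "l2_unit_fin v \<longleftrightarrow> finite {g. v g \<noteq> 0} \<and> (\<Sum>g\<in>{g. v g \<noteq> 0}. (cmod (v g))\<^sup>2) \<le> 1"

definition mat_opnorm :: "('g \<Rightarrow> 'g \<Rightarrow> complex) \<Rightarrow> real" where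
  "mat_opnorm M = Sup {cmod (\<Sum>h\<in>{h. \<eta> h \<noteq> 0}. \<Sum>g\<in>{g. \<xi> g \<noteq> 0}. cnj (\<eta> h) * M h g * \<xi> g)
       | \<xi> \<eta>. l2_unit_fin \<xi> \<and> l2_unit_fin \<eta>}"

definition cp_norm :: "('x,'g) cp_elem \<Rightarrow> real" where
  "cp_norm a = (SUP x. mat_opnorm (a x))"

end

theory Submission
  imports Defs
begin

lemma has_sum_sum_fun:
  fixes f :: "'k \<Rightarrow> 'i \<Rightarrow> real"
  assumes "finite K" "\<And>k. k \<in> K \<Longrightarrow> (f k has_sum S k) A"
  shows "((\<lambda>i. \<Sum>k\<in>K. f k i) has_sum (\<Sum>k\<in>K. S k)) A"
  using assms
proof (induction K rule: finite_induct)
  case empty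
  then show ?case by simp
next
  case (insert x F)
  have "((\<lambda>i. f x i + (\<Sum>k\<in>F. f k i)) has_sum (S x + (\<Sum>k\<in>F. S k))) A"
    by (intro has_sum_add) (use insert in auto)
  then show ?case using insert by simp
qed

lemma sum_sum_if_le:
  fixes X :: "'h \<Rightarrow> real"
  assumes "finite G" "\<And>h g1 g2. P h g1 \<Longrightarrow> P h g2 \<Longrightarrow> g1 = g2" "\<And>h. X h \<ge> 0"
  shows "(\<Sum>h\<in>H. \<Sum>g\<in>G. if P h g then X h else 0) \<le> (\<Sum>h\<in>H. X h)"
proof (rule sum_mono)
  fix h
  have "(\<Sum>g\<in>G. if P h g then X h else 0) = (\<Sum>g\<in>{g\<in>G. P h g}. X h)"
    by (rule sum.inter_filter[symmetric]) (rule assms(1))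
  also have "\<dots> = real (card {g\<in>G. P h g}) * X h" by simp
  also have "card {g\<in>G. P h g} \<le> Suc 0"
    using assms(1,2) by (subst card_le_Suc0_iff_eq) auto
  hence "real (card {g\<in>G. P h g}) * X h \<le> 1 * X h"
    by (intro mult_right_mono) (use assms(3) in auto)
  finally show "(\<Sum>g\<in>G. if P h g then X h else 0) \<le> X h" by simp
qed

lemma opnorm_compare:
  fixes A B :: "'g \<Rightarrow> 'g \<Rightarrow> complex" and r :: "'g \<Rightarrow> 'g \<Rightarrow> real"
  assumes Br: "\<And>h g. B h g = complex_of_real (r h g)" and rnn: "\<And>h g. r h g \<ge> 0"
    and Ar: "\<And>h g. cmod (A h g) \<le> c * r h g" and c: "c \<ge> 0"
    and bound: "\<And>\<xi> \<eta>. l2_unit_fin \<xi> \<Longrightarrow> l2_unit_fin \<eta> \<Longrightarrow>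
        (\<Sum>h\<in>{h. \<eta> h \<noteq> 0}. \<Sum>g\<in>{g. \<xi> g \<noteq> 0}. cmod (\<eta> h) * r h g * cmod (\<xi> g)) \<le> 1"
  shows "mat_opnorm A \<le> c * mat_opnorm B \<and> mat_opnorm B \<le> 1"
proof -
  define R where "R \<xi> \<eta> = (\<Sum>h\<in>{h. \<eta> h \<noteq> 0}. \<Sum>g\<in>{g. (\<xi>::'g\<Rightarrow>complex) g \<noteq> 0}. cmod (\<eta> h) * r h g * cmod (\<xi> g))" for \<xi> \<eta>
  define SA where "SA = {cmod (\<Sum>h\<in>{h. \<eta> h \<noteq> 0}. \<Sum>g\<in>{g. \<xi> g \<noteq> 0}. cnj (\<eta> h) * A h g * \<xi> g)
       | \<xi> \<eta>. l2_unit_fin \<xi> \<and> l2_unit_fin \<eta>}"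
  define SB where "SB = {cmod (\<Sum>h\<in>{h. \<eta> h \<noteq> 0}. \<Sum>g\<in>{g. \<xi> g \<noteq> 0}. cnj (\<eta> h) * B h g * \<xi> g)
       | \<xi> \<eta>. l2_unit_fin \<xi> \<and> l2_unit_fin \<eta>}"
  have z: "l2_unit_fin (\<lambda>_. 0)" by (simp add: l2_unit_fin_def)
  have gen: "cmod (\<Sum>h\<in>{h. \<eta> h \<noteq> 0}. \<Sum>g\<in>{g. \<xi> g \<noteq> 0}. cnj (\<eta> h) * M h g * \<xi> g) \<le> d * R \<xi> \<eta>"
    if M: "\<And>h g. cmod (M h g) \<le> d * r h g" and d: "d \<ge> 0" for M :: "'g \<Rightarrow> 'g \<Rightarrow> complex" and d \<xi> \<eta>
  proof -
    have "cmod (\<Sum>h\<in>{h. \<eta> h \<noteq> 0}. \<Sum>g\<in>{g. \<xi> g \<noteq> 0}. cnj (\<eta> h) * M h g * \<xi> g)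
        \<le> (\<Sum>h\<in>{h. \<eta> h \<noteq> 0}. cmod (\<Sum>g\<in>{g. \<xi> g \<noteq> 0}. cnj (\<eta> h) * M h g * \<xi> g))"
      by (rule norm_sum)
    also have "\<dots> \<le> (\<Sum>h\<in>{h. \<eta> h \<noteq> 0}. \<Sum>g\<in>{g. \<xi> g \<noteq> 0}. cmod (cnj (\<eta> h) * M h g * \<xi> g))"
      by (intro sum_mono norm_sum)
    also have "\<dots> \<le> (\<Sum>h\<in>{h. \<eta> h \<noteq> 0}. \<Sum>g\<in>{g. \<xi> g \<noteq> 0}. d * (cmod (\<eta> h) * r h g * cmod (\<xi> g)))"
    proof (intro sum_mono)
      fix h g
      have "cmod (cnj (\<eta> h) * M h g * \<xi> g) = cmod (\<eta> h) * cmod (M h g) * cmod (\<xi> g)"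
        by (simp add: norm_mult)
      also have "\<dots> \<le> cmod (\<eta> h) * (d * r h g) * cmod (\<xi> g)"
        by (intro mult_right_mono mult_left_mono M) auto
      finally show "cmod (cnj (\<eta> h) * M h g * \<xi> g) \<le> d * (cmod (\<eta> h) * r h g * cmod (\<xi> g))"
        by (simp add: algebra_simps)
    qed
    also have "\<dots> = d * R \<xi> \<eta>" by (simp add: R_def sum_distrib_left)
    finally show ?thesis .
  qed
  have RB: "R \<xi> \<eta> \<in> SB" if "l2_unit_fin \<xi>" "l2_unit_fin \<eta>" for \<xi> \<eta>
  proof -
    define \<xi>' where "\<xi>' g = complex_of_real (cmod (\<xi> g))" for g
    define \<eta>' where "\<eta>' g = complex_of_real (cmod (\<eta> g))" for g
    have s1: "{g. \<xi>' g \<noteq> 0} = {g. \<xi> g \<noteq> 0}" "{g. \<eta>' g \<noteq> 0} = {g. \<eta> g \<noteq> 0}"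
      by (auto simp: \<xi>'_def \<eta>'_def)
    have u: "l2_unit_fin \<xi>'" "l2_unit_fin \<eta>'"
      using that by (auto simp: l2_unit_fin_def s1) (auto simp: \<xi>'_def \<eta>'_def)
    have "(\<Sum>h\<in>{h. \<eta>' h \<noteq> 0}. \<Sum>g\<in>{g. \<xi>' g \<noteq> 0}. cnj (\<eta>' h) * B h g * \<xi>' g)
        = complex_of_real (R \<xi> \<eta>)"
      by (simp add: s1 R_def Br \<xi>'_def \<eta>'_def)
    moreover have "R \<xi> \<eta> \<ge> 0" unfolding R_def
      by (intro sum_nonneg mult_nonneg_nonneg rnn) auto
    ultimately have "R \<xi> \<eta> = cmod (\<Sum>h\<in>{h. \<eta>' h \<noteq> 0}. \<Sum>g\<in>{g. \<xi>' g \<noteq> 0}. cnj (\<eta>' h) * B h g * \<xi>' g)"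
      by simp
    then show ?thesis unfolding SB_def using u by blast
  qed
  have SB1: "\<And>y. y \<in> SB \<Longrightarrow> y \<le> 1"
  proof -
    fix y assume "y \<in> SB"
    then obtain \<xi> \<eta> where u: "l2_unit_fin \<xi>" "l2_unit_fin \<eta>" and
      y: "y = cmod (\<Sum>h\<in>{h. \<eta> h \<noteq> 0}. \<Sum>g\<in>{g. \<xi> g \<noteq> 0}. cnj (\<eta> h) * B h g * \<xi> g)"
      unfolding SB_def by blast
    have "y \<le> 1 * R \<xi> \<eta>" unfolding y by (rule gen) (auto simp: Br rnn)
    also have "\<dots> \<le> 1" using bound[OF u] by (simp add: R_def)
    finally show "y \<le> 1" .
  qed
  have neB: "SB \<noteq> {}" using RB[OF z z] by blast
  have bddB: "bdd_above SB" using SB1 by (auto simp: bdd_above_def)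
  have "mat_opnorm B \<le> 1" unfolding mat_opnorm_def SB_def[symmetric]
    by (rule cSup_least[OF neB SB1])
  moreover have "mat_opnorm A \<le> c * mat_opnorm B"
  proof -
    have neA: "SA \<noteq> {}" unfolding SA_def using z by blast
    have "Sup SA \<le> c * Sup SB"
    proof (rule cSup_least[OF neA])
      fix y assume "y \<in> SA"
      then obtain \<xi> \<eta> where u: "l2_unit_fin \<xi>" "l2_unit_fin \<eta>" and
        y: "y = cmod (\<Sum>h\<in>{h. \<eta> h \<noteq> 0}. \<Sum>g\<in>{g. \<xi> g \<noteq> 0}. cnj (\<eta> h) * A h g * \<xi> g)"
        unfolding SA_def by blast
      have "y \<le> c * R \<xi> \<eta>" unfolding y by (rule gen[OF Ar c])
      also have "\<dots> \<le> c * Sup SB"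
        by (intro mult_left_mono c cSup_upper bddB RB u)
      finally show "y \<le> c * Sup SB" .
    qed
    then show ?thesis unfolding mat_opnorm_def SA_def SB_def .
  qed
  ultimately show ?thesis by blast
qed


lemma amgm: "(x::real) * y \<le> (x\<^sup>2 + y\<^sup>2) / 2"
proof -
  have "0 \<le> (x - y)\<^sup>2" by simp
  then show ?thesis by (simp add: power2_eq_square algebra_simps)
qed

lemma p_summable:
  fixes a :: "'i \<Rightarrow> 'g \<Rightarrow> real"
  assumes ann: "\<And>i h. a i h \<ge> 0" and hs: "\<And>h. ((\<lambda>i. (a i h)\<^sup>2) has_sum 1) UNIV"
  shows "(\<lambda>i. if P i then a i h * a i g else 0) summable_on UNIV"
proof (rule summable_on_comparison_test)
  have "((\<lambda>i. (a i h)\<^sup>2 + (a i g)\<^sup>2) has_sum (1 + 1)) UNIV"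
    by (intro has_sum_add hs)
  then show "(\<lambda>i. (a i h)\<^sup>2 + (a i g)\<^sup>2) summable_on UNIV"
    by (auto simp: summable_on_def)
  fix i
  have "a i h * a i g \<le> (a i h)\<^sup>2 + (a i g)\<^sup>2"
    using sum_squares_bound[of "a i h" "a i g"] ann[of i h] ann[of i g]
      zero_le_power2[of "a i h"] zero_le_power2[of "a i g"] mult_nonneg_nonneg[of "a i h" "a i g"] by linarith
  then show "(if P i then a i h * a i g else 0) \<le> (a i h)\<^sup>2 + (a i g)\<^sup>2"
    by auto
  show "0 \<le> (if P i then a i h * a i g else 0)" using ann by auto
qed

lemma quad_bound:
  fixes a :: "'i \<Rightarrow> 'g \<Rightarrow> real" and P :: "'i \<Rightarrow> 'g \<Rightarrow> 'g \<Rightarrow> bool"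
  assumes ann: "\<And>i h. a i h \<ge> 0" and hs: "\<And>h. ((\<lambda>i. (a i h)\<^sup>2) has_sum 1) UNIV"
    and u1: "\<And>i h g1 g2. P i h g1 \<Longrightarrow> P i h g2 \<Longrightarrow> g1 = g2"
    and u2: "\<And>i h1 h2 g. P i h1 g \<Longrightarrow> P i h2 g \<Longrightarrow> h1 = h2"
    and ux: "l2_unit_fin \<xi>" and ue: "l2_unit_fin \<eta>"
  shows "(\<Sum>h\<in>{h. \<eta> h \<noteq> 0}. \<Sum>g\<in>{g. \<xi> g \<noteq> 0}. cmod (\<eta> h)
            * (\<Sum>\<^sub>\<infinity>i. if P i h g then a i h * a i g else 0) * cmod (\<xi> g)) \<le> 1"
proof -
  define H where "H = {h. \<eta> h \<noteq> 0}"
  define G where "G = {g. \<xi> g \<noteq> 0}"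
  have fH: "finite H" and fG: "finite G" using ux ue by (auto simp: H_def G_def l2_unit_fin_def)
  have nH: "(\<Sum>h\<in>H. (cmod (\<eta> h))\<^sup>2) \<le> 1" and nG: "(\<Sum>g\<in>G. (cmod (\<xi> g))\<^sup>2) \<le> 1"
    using ux ue by (auto simp: H_def G_def l2_unit_fin_def)
  define p where "p i h g = (if P i h g then a i h * a i g else 0)" for i h g
  define T where "T i = (\<Sum>h\<in>H. \<Sum>g\<in>G. cmod (\<eta> h) * p i h g * cmod (\<xi> g))" for i
  have hsT: "(T has_sum (\<Sum>h\<in>H. \<Sum>g\<in>G. cmod (\<eta> h) * (\<Sum>\<^sub>\<infinity>i. p i h g) * cmod (\<xi> g))) UNIV"
    unfolding T_def
  proof (intro has_sum_sum_fun fH fG)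
    fix h g
    have "((\<lambda>i. p i h g) has_sum (\<Sum>\<^sub>\<infinity>i. p i h g)) UNIV"
      unfolding p_def by (intro has_sum_infsum p_summable ann hs)
    then show "((\<lambda>i. cmod (\<eta> h) * p i h g * cmod (\<xi> g)) has_sum cmod (\<eta> h) * (\<Sum>\<^sub>\<infinity>i. p i h g) * cmod (\<xi> g)) UNIV"
      by (intro has_sum_cmult_left has_sum_cmult_right)
  qed
  have sq: "\<And>i y. (\<Sum>i\<in>F. (a i y)\<^sup>2) \<le> 1" if "finite F" for F
    using finite_sum_le_has_sum[OF hs that] by auto
  have Tle: "T i \<le> (\<Sum>h\<in>H. (cmod (\<eta> h))\<^sup>2 * (a i h)\<^sup>2 / 2) + (\<Sum>g\<in>G. (cmod (\<xi> g))\<^sup>2 * (a i g)\<^sup>2 / 2)" for i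
  proof -
    have "T i \<le> (\<Sum>h\<in>H. \<Sum>g\<in>G. (if P i h g then (cmod (\<eta> h))\<^sup>2 * (a i h)\<^sup>2 / 2 else 0)
                                 + (if P i h g then (cmod (\<xi> g))\<^sup>2 * (a i g)\<^sup>2 / 2 else 0))"
      unfolding T_def p_def
    proof (intro sum_mono)
      fix h g
      have "cmod (\<eta> h) * (a i h * a i g) * cmod (\<xi> g) = (cmod (\<eta> h) * a i h) * (a i g * cmod (\<xi> g))"
        by (simp add: algebra_simps)
      also have "\<dots> \<le> ((cmod (\<eta> h) * a i h)\<^sup>2 + (a i g * cmod (\<xi> g))\<^sup>2) / 2"
        by (rule amgm)
      finally show "cmod (\<eta> h) * (if P i h g then a i h * a i g else 0) * cmod (\<xi> g)
          \<le> (if P i h g then (cmod (\<eta> h))\<^sup>2 * (a i h)\<^sup>2 / 2 else 0) +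
             (if P i h g then (cmod (\<xi> g))\<^sup>2 * (a i g)\<^sup>2 / 2 else 0)"
        by (auto simp: power_mult_distrib algebra_simps)
    qed
    also have "\<dots> = (\<Sum>h\<in>H. \<Sum>g\<in>G. if P i h g then (cmod (\<eta> h))\<^sup>2 * (a i h)\<^sup>2 / 2 else 0)
          + (\<Sum>g\<in>G. \<Sum>h\<in>H. if P i h g then (cmod (\<xi> g))\<^sup>2 * (a i g)\<^sup>2 / 2 else 0)"
      by (simp add: sum.distrib sum.swap[of _ H G])
    also have "\<dots> \<le> (\<Sum>h\<in>H. (cmod (\<eta> h))\<^sup>2 * (a i h)\<^sup>2 / 2) + (\<Sum>g\<in>G. (cmod (\<xi> g))\<^sup>2 * (a i g)\<^sup>2 / 2)"
    proof (intro add_mono)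
      show "(\<Sum>h\<in>H. \<Sum>g\<in>G. if P i h g then (cmod (\<eta> h))\<^sup>2 * (a i h)\<^sup>2 / 2 else 0)
          \<le> (\<Sum>h\<in>H. (cmod (\<eta> h))\<^sup>2 * (a i h)\<^sup>2 / 2)"
        by (rule sum_sum_if_le[OF fG]) (auto intro: u1)
      show "(\<Sum>g\<in>G. \<Sum>h\<in>H. if P i h g then (cmod (\<xi> g))\<^sup>2 * (a i g)\<^sup>2 / 2 else 0)
          \<le> (\<Sum>g\<in>G. (cmod (\<xi> g))\<^sup>2 * (a i g)\<^sup>2 / 2)"
        by (rule sum_sum_if_le[OF fH, where P="\<lambda>g h. P i h g"]) (auto intro: u2)
    qed
    finally show ?thesis .
  qed
  have "(\<Sum>h\<in>H. \<Sum>g\<in>G. cmod (\<eta> h) * (\<Sum>\<^sub>\<infinity>i. p i h g) * cmod (\<xi> g)) \<le> 1"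
  proof (rule has_sum_le_finite_sums[OF hsT])
    fix F :: "'i set" assume F: "finite F"
    have "sum T F \<le> (\<Sum>i\<in>F. (\<Sum>h\<in>H. (cmod (\<eta> h))\<^sup>2 * (a i h)\<^sup>2 / 2) + (\<Sum>g\<in>G. (cmod (\<xi> g))\<^sup>2 * (a i g)\<^sup>2 / 2))"
      by (intro sum_mono Tle)
    also have "\<dots> = (\<Sum>h\<in>H. (cmod (\<eta> h))\<^sup>2 / 2 * (\<Sum>i\<in>F. (a i h)\<^sup>2)) + (\<Sum>g\<in>G. (cmod (\<xi> g))\<^sup>2 / 2 * (\<Sum>i\<in>F. (a i g)\<^sup>2))"
      by (simp add: sum.distrib sum.swap[of _ F] sum_distrib_left)
    also have "\<dots> \<le> (\<Sum>h\<in>H. (cmod (\<eta> h))\<^sup>2 / 2 * 1) + (\<Sum>g\<in>G. (cmod (\<xi> g))\<^sup>2 / 2 * 1)"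
      by (intro add_mono sum_mono mult_left_mono sq F) auto
    also have "\<dots> \<le> 1" using nH nG by (simp add: sum_divide_distrib[symmetric])
    finally show "sum T F \<le> 1" .
  qed
  then show ?thesis unfolding H_def G_def p_def .
qed


theorem mainTheorem14:
  fixes act :: "'g::{group_add, countable} \<Rightarrow> 'x::t2_space \<Rightarrow> 'x"
    and s :: "'i \<Rightarrow> 'g" and fs :: "'i \<Rightarrow> 'x \<Rightarrow> real"
    and f :: "'x \<Rightarrow>\<^sub>C complex" and t :: 'g
  assumes "compact (UNIV :: 'x set)"
    and "group_action act" and "minimal_action act"
    and "gen_prob_measure s fs"
  shows "cp_norm (mu_apply act s fs (cp_fl act (apply_bcontfun f) t))
           \<le> norm f * cp_norm (mu_apply act s fs (cp_lambda t))"
proof -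
  have fnn: "\<And>i y. fs i y \<ge> 0" using assms(4) by (auto simp: gen_prob_measure_def)
  have hs: "\<And>y. ((\<lambda>i. (fs i y)\<^sup>2) has_sum 1) UNIV"
  proof -
    fix y
    have "uniform_limit UNIV (\<lambda>F y. \<Sum>i\<in>F. (fs i y)\<^sup>2) (\<lambda>y. 1) (finite_subsets_at_top UNIV)"
      using assms(4) by (auto simp: gen_prob_measure_def)
    from tendsto_uniform_limitI[OF this, of y]
    show "((\<lambda>i. (fs i y)\<^sup>2) has_sum 1) UNIV" by (simp add: has_sum_def)
  qed
  define A where "A = mu_apply act s fs (cp_fl act (apply_bcontfun f) t)"
  define B where "B = mu_apply act s fs (cp_lambda t)"
  have per: "mat_opnorm (A x) \<le> norm f * mat_opnorm (B x) \<and> mat_opnorm (B x) \<le> 1" for x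
  proof -
    define a where "a i h = fs i (act h x)" for i h
    define P where "P i h g = (-s i + h = t + (-s i + g))" for i h g
    define p where "p i h g = (if P i h g then a i h * a i g else 0)" for i h g
    define r where "r h g = (\<Sum>\<^sub>\<infinity>i. p i h g)" for h g
    have ann: "\<And>i h. a i h \<ge> 0" by (simp add: a_def fnn)
    have hsa: "\<And>h. ((\<lambda>i. (a i h)\<^sup>2) has_sum 1) UNIV" by (simp add: a_def hs)
    have psum: "\<And>h g. (\<lambda>i. p i h g) summable_on UNIV"
      unfolding p_def by (rule p_summable[OF ann hsa])
    have pnn: "\<And>i h g. p i h g \<ge> 0" by (simp add: p_def ann)
    show ?thesis
    proof (rule opnorm_compare[where r = r])
      fix h g
      have "((\<lambda>i. complex_of_real (p i h g)) has_sum complex_of_real (r h g)) UNIV"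
        unfolding has_sum_of_real_iff r_def using psum by (rule has_sum_infsum)
      moreover have "(\<lambda>i. complex_of_real (p i h g)) = (\<lambda>i. complex_of_real (fs i (act h x))
        * cp_lambda t x (- s i + h) (- s i + g) * complex_of_real (fs i (act g x)))"
        by (auto simp: p_def P_def a_def cp_lambda_def)
      ultimately show "B x h g = complex_of_real (r h g)"
        unfolding B_def mu_apply_def by (simp add: infsumI)
      show "r h g \<ge> 0" unfolding r_def by (intro infsum_nonneg pnn)
      define q where "q i = complex_of_real (fs i (act h x))
        * cp_fl act (apply_bcontfun f) t x (- s i + h) (- s i + g) * complex_of_real (fs i (act g x))" for i
      have qb: "norm (q i) \<le> norm f * p i h g" for i
      proof (cases "P i h g")
        case True
        have "norm (q i) = a i h * cmod (apply_bcontfun f (act (- s i + h) x)) * a i g"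
          using True ann[of i h] ann[of i g] by (simp add: q_def P_def cp_fl_def a_def norm_mult)
        also have "\<dots> \<le> a i h * norm f * a i g"
          by (intro mult_right_mono mult_left_mono norm_bounded ann)
        finally show ?thesis using True by (simp add: p_def algebra_simps)
      next
        case False
        then show ?thesis by (simp add: q_def P_def cp_fl_def p_def)
      qed
      have qs: "(\<lambda>i. norm (q i)) summable_on UNIV"
        by (rule summable_on_comparison_test[OF summable_on_cmult_right[OF psum[of h g], where c="norm f"]]) (auto simp: qb)
      have "cmod (A x h g) = norm (infsum q UNIV)" unfolding A_def mu_apply_def q_def by simp
      also have "\<dots> \<le> (\<Sum>\<^sub>\<infinity>i. norm (q i))" by (rule norm_infsum_bound[OF qs])
      also have "\<dots> \<le> (\<Sum>\<^sub>\<infinity>i. norm f * p i h g)"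
        by (rule infsum_mono[OF qs summable_on_cmult_right[OF psum]]) (rule qb)
      also have "\<dots> = norm f * r h g" unfolding r_def by (rule infsum_cmult_right) (rule psum)
      finally show "cmod (A x h g) \<le> norm f * r h g" .
    next
      show "norm f \<ge> 0" by simp
    next
      fix \<xi> \<eta> :: "'g \<Rightarrow> complex"
      assume "l2_unit_fin \<xi>" "l2_unit_fin \<eta>"
      then show "(\<Sum>h\<in>{h. \<eta> h \<noteq> 0}. \<Sum>g\<in>{g. \<xi> g \<noteq> 0}. cmod (\<eta> h) * r h g * cmod (\<xi> g)) \<le> 1"
        unfolding r_def p_def
        by (intro quad_bound[OF ann hsa]) (auto simp: P_def, metis add_left_cancel)
    qed
  qed
  have bdd: "bdd_above (range (\<lambda>x. mat_opnorm (B x)))"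
    using per by (auto simp: bdd_above_def)
  have "(SUP x. mat_opnorm (A x)) \<le> norm f * (SUP x. mat_opnorm (B x))"
  proof (rule cSUP_least)
    fix x
    have "mat_opnorm (A x) \<le> norm f * mat_opnorm (B x)" using per by blast
    also have "\<dots> \<le> norm f * (SUP x. mat_opnorm (B x))"
      by (intro mult_left_mono cSUP_upper bdd) auto
    finally show "mat_opnorm (A x) \<le> norm f * (SUP x. mat_opnorm (B x))" .
  qed simp
  then show ?thesis unfolding cp_norm_def A_def B_def .
qed

end
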